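(* Let $P(z\mid\theta)=h(z)\,g(\theta)\exp(\eta(\theta)\cdot T(z))$ be an exponential family distribution with natural parameter $\eta(\theta)$. Let its conjugate prior be \[ P(\eta(\theta))=\frac{1}{Z_0}\,g(\theta)^{n_0}\exp(\eta(\theta)\cdot\tau_0), \] with hyperparameters $n_0,\tau_0$ and normalizer $Z_0$. Suppose that $\theta^*\sim P(\theta)$ (this conjugate prior), that $\mathcal{D}=P(z\mid\theta^* )$ is the data distribution, and that $\ell(z,\theta)=-\log P(z\mid\theta)$. Then for any training set $Z=\{z_1,\dots,z_n\}\sim\mathcal{D}^n$, the regularizer \[ R^*(\theta)=-\frac1n\log P(\eta(\theta)) \] is a perfect, Bayes-optimal regularizer.
   Context: The training loss is $\hat L(\theta)=\frac1n\sum_{i=1}^n\ell(z_i,\theta)$, and $L(\theta,\mathcal{D})=\mathbb{E}_{z\sim\mathcal{D}}[\ell(z,\theta)]$. The distribution $\mathcal{D}$ is itself random, with law $\mathcal{D}_1$ (here induced by $\theta^*$). The conditional expected test loss is $\bar L(\theta,Z)=\mathbb{E}_{\mathcal{D}\sim\mathcal{D}_1}[L(\theta,\mathcal{D})\mid Z]$. A regularizer $R^*$ is Bayes-optimal if $\arg\min_{\theta\in\Theta}\{\hat L(\theta)+R^*(\theta)\}=\arg\min_{\theta\in\Theta}\{\bar L(\theta,Z)\}$. It is perfect if, in addition, $\hat L(\theta)+R^*(\theta)=h(\bar L(\theta,Z))$ for all $\theta\in\Theta$, for some monotone function $h$. *)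

theory Defs
  imports "HOL-Probability.Probability"
begin

definition nat_param_space :: "'z measure \<Rightarrow> ('z \<Rightarrow> real) \<Rightarrow> ('z \<Rightarrow> 'k::euclidean_space) \<Rightarrow> 'k set" where
  "nat_param_space M h T = {e. integrable M (\<lambda>z. h z * exp (e \<bullet> T z))}"

text \<open>The normalising factor g, as a function of the natural parameter (forced by normalisation).\<close>
definition expfam_g :: "'z measure \<Rightarrow> ('z \<Rightarrow> real) \<Rightarrow> ('z \<Rightarrow> 'k::euclidean_space) \<Rightarrow> 'k \<Rightarrow> real" where
  "expfam_g M h T e = 1 / (\<integral>z. h z * exp (e \<bullet> T z) \<partial>M)"

definition expfam_pdf :: "'z measure \<Rightarrow> ('z \<Rightarrow> real) \<Rightarrow> ('z \<Rightarrow> 'k::euclidean_space) \<Rightarrow> 'k \<Rightarrow> 'z \<Rightarrow> real" where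
  "expfam_pdf M h T e z = h z * expfam_g M h T e * exp (e \<bullet> T z)"

definition expfam_dist :: "'z measure \<Rightarrow> ('z \<Rightarrow> real) \<Rightarrow> ('z \<Rightarrow> 'k::euclidean_space) \<Rightarrow> 'k \<Rightarrow> 'z measure" where
  "expfam_dist M h T e = density M (\<lambda>z. ennreal (expfam_pdf M h T e z))"

definition emp_loss :: "('z \<Rightarrow> 'p \<Rightarrow> real) \<Rightarrow> nat \<Rightarrow> (nat \<Rightarrow> 'z) \<Rightarrow> 'p \<Rightarrow> real" where
  "emp_loss l n Z \<theta> = (\<Sum>i<n. l (Z i) \<theta>) / real n"

definition pop_loss :: "('z \<Rightarrow> 'p \<Rightarrow> real) \<Rightarrow> 'z measure \<Rightarrow> 'p \<Rightarrow> real" where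
  "pop_loss l D \<theta> = (\<integral>z. l z \<theta> \<partial>D)"

text \<open>Conditional expectation (given the training set) of a function F of the random natural
  parameter, computed as the posterior expectation via Bayes' rule: prior density p0 on the set
  Om (w.r.t. Lebesgue measure) and likelihood lik.\<close>
definition posterior_expectation ::
  "'k::euclidean_space set \<Rightarrow> ('k \<Rightarrow> real) \<Rightarrow> ('k \<Rightarrow> real) \<Rightarrow> ('k \<Rightarrow> real) \<Rightarrow> real" where
  "posterior_expectation Om p0 lik F =
     (LINT e:Om|lborel. F e * lik e * p0 e) / (LINT e:Om|lborel. lik e * p0 e)"

definition argmin_on :: "'p set \<Rightarrow> ('p \<Rightarrow> real) \<Rightarrow> 'p set" where
  "argmin_on \<Theta> f = {\<theta>\<in>\<Theta>. \<forall>\<theta>'\<in>\<Theta>. f \<theta> \<le> f \<theta>'}"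

definition bayes_optimal_reg :: "'p set \<Rightarrow> ('p \<Rightarrow> real) \<Rightarrow> ('p \<Rightarrow> real) \<Rightarrow> ('p \<Rightarrow> real) \<Rightarrow> bool" where
  "bayes_optimal_reg \<Theta> Lhat R Lbar \<longleftrightarrow>
     argmin_on \<Theta> (\<lambda>\<theta>. Lhat \<theta> + R \<theta>) = argmin_on \<Theta> Lbar"

definition perfect_reg :: "'p set \<Rightarrow> ('p \<Rightarrow> real) \<Rightarrow> ('p \<Rightarrow> real) \<Rightarrow> ('p \<Rightarrow> real) \<Rightarrow> bool" where
  "perfect_reg \<Theta> Lhat R Lbar \<longleftrightarrow>
     bayes_optimal_reg \<Theta> Lhat R Lbar \<and>
     (\<exists>hf :: real \<Rightarrow> real. mono hf \<and> (\<forall>\<theta>\<in>\<Theta>. Lhat \<theta> + R \<theta> = hf (Lbar \<theta>)))"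

end

theory Submission
  imports Defs
begin



lemma abs_exp_bound:
  fixes u t s e :: real
  assumes "0 < e" "\<bar>t - s\<bar> \<le> e"
  shows "\<bar>u\<bar> * exp (t * u) \<le> (exp ((s + 2*e) * u) + exp ((s - 2*e) * u)) / e"
proof -
  have "e * \<bar>u\<bar> \<le> exp (e * \<bar>u\<bar>)" using exp_ge_add_one_self[of "e * \<bar>u\<bar>"] by linarith
  hence "e * (\<bar>u\<bar> * exp (t * u)) \<le> exp (e * \<bar>u\<bar>) * exp (t * u)"
    by (metis exp_gt_zero mult.assoc mult_right_mono order_less_imp_le)
  also have "\<dots> = exp (e * \<bar>u\<bar> + t * u)" by (simp add: exp_add)
  also have "\<dots> \<le> exp ((s + 2*e) * u) + exp ((s - 2*e) * u)"
  proof -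
    have "(t - s) * u \<le> e * \<bar>u\<bar>"
    proof -
      have "(t - s) * u \<le> \<bar>t - s\<bar> * \<bar>u\<bar>" by (metis abs_ge_self abs_mult)
      also have "\<dots> \<le> e * \<bar>u\<bar>" using assms(2) by (intro mult_right_mono) auto
      finally show ?thesis .
    qed
    hence "e * \<bar>u\<bar> + t * u \<le> s * u + 2 * e * \<bar>u\<bar>" by (simp add: algebra_simps)
    moreover have "s * u + 2 * e * \<bar>u\<bar> = (s + 2*e) * u \<or> s * u + 2 * e * \<bar>u\<bar> = (s - 2*e) * u"
      by (cases "u \<ge> 0") (auto simp: algebra_simps)
    ultimately show ?thesis
      by (smt (verit) exp_gt_zero exp_le_cancel_iff)
  qed
  finally show ?thesis using assms(1) by (simp add: field_simps mult.commute)
qed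




lemma dq_exp_bound:
  fixes u t s e :: real
  assumes "0 < e" "\<bar>t - s\<bar> \<le> e" "t \<noteq> s"
  shows "\<bar>(exp (t * u) - exp (s * u)) / (t - s)\<bar> \<le> (exp ((s + 2*e) * u) + exp ((s - 2*e) * u)) / e"
proof -
  have D: "\<And>x. ((\<lambda>t. exp (t * u)) has_real_derivative exp (x * u) * u) (at x)"
    by (auto intro!: derivative_eq_intros)
  obtain \<xi> where \<xi>: "\<bar>\<xi> - s\<bar> \<le> \<bar>t - s\<bar>"
    "(exp (t * u) - exp (s * u)) / (t - s) = exp (\<xi> * u) * u"
  proof (cases "s < t")
    case True
    from MVT2[OF True, of "\<lambda>t. exp (t * u)" "\<lambda>x. exp (x * u) * u"] D
    obtain z where "s < z" "z < t" "exp (t * u) - exp (s * u) = (t - s) * (exp (z * u) * u)" by blast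
    thus ?thesis using True by (intro that[of z]) auto
  next
    case False
    hence ts: "t < s" using assms(3) by auto
    from MVT2[OF ts, of "\<lambda>t. exp (t * u)" "\<lambda>x. exp (x * u) * u"] D
    obtain z where "t < z" "z < s" "exp (s * u) - exp (t * u) = (s - t) * (exp (z * u) * u)" by blast
    moreover have "(exp (t * u) - exp (s * u)) / (t - s) = (exp (s * u) - exp (t * u)) / (s - t)"
      using ts by (simp add: field_simps)
    ultimately show ?thesis using ts by (intro that[of z]) auto
  qed
  have "(exp (t * u) - exp (s * u)) / (t - s) = exp (\<xi> * u) * u" by (rule \<xi>(2))
  hence "\<bar>(exp (t * u) - exp (s * u)) / (t - s)\<bar> = \<bar>u\<bar> * exp (\<xi> * u)" by (simp add: abs_mult)
  also have "\<dots> \<le> (exp ((s + 2*e) * u) + exp ((s - 2*e) * u)) / e"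
    using \<xi>(1) assms(1,2) by (intro abs_exp_bound) auto
  finally show ?thesis .
qed

lemma deriv_param_exp_integral:
  fixes w u :: "'z \<Rightarrow> real"
  assumes wm[measurable]: "w \<in> borel_measurable M" and um[measurable]: "u \<in> borel_measurable M"
    and wpos: "\<And>z. z \<in> space M \<Longrightarrow> 0 \<le> w z"
    and int: "\<And>t. t \<in> {a<..<b} \<Longrightarrow> integrable M (\<lambda>z. w z * exp (t * u z))"
    and s: "s \<in> {a<..<b}"
  shows "integrable M (\<lambda>z. w z * u z * exp (s * u z))"
    and "((\<lambda>t. \<integral>z. w z * exp (t * u z) \<partial>M) has_real_derivative (\<integral>z. w z * u z * exp (s * u z) \<partial>M)) (at s)"
proof -
  define e where "e = min (s - a) (b - s) / 3"
  have sab: "a < s" "s < b" using s by auto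
  have e: "0 < e" "a < s - 2*e" "s + 2*e < b" using sab unfolding e_def by (auto simp: min_def field_simps)
  define B where "B z = w z * (exp ((s + 2*e) * u z) + exp ((s - 2*e) * u z)) / e" for z
  have Bint: "integrable M B"
    unfolding B_def distrib_left
    using int[of "s + 2*e"] int[of "s - 2*e"] e by (auto intro!: integrable_divide)
  have bnd1: "\<bar>w z * u z * exp (t * u z)\<bar> \<le> B z" if "z \<in> space M" "\<bar>t - s\<bar> \<le> e" for z t
  proof -
    have "\<bar>w z * u z * exp (t * u z)\<bar> = w z * (\<bar>u z\<bar> * exp (t * u z))"
      using wpos[OF that(1)] by (simp add: abs_mult)
    also have "\<dots> \<le> w z * ((exp ((s + 2*e) * u z) + exp ((s - 2*e) * u z)) / e)"
      using wpos[OF that(1)] abs_exp_bound[OF e(1) that(2)] by (intro mult_left_mono) auto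
    finally show ?thesis by (simp add: B_def)
  qed
  show I: "integrable M (\<lambda>z. w z * u z * exp (s * u z))"
  proof (rule Bochner_Integration.integrable_bound[OF Bint])
    show "AE z in M. norm (w z * u z * exp (s * u z)) \<le> norm (B z)"
    proof (rule AE_I2)
      fix z assume "z \<in> space M"
      hence "\<bar>w z * u z * exp (s * u z)\<bar> \<le> B z" using bnd1[of z s] e(1) by auto
      thus "norm (w z * u z * exp (s * u z)) \<le> norm (B z)" by simp
    qed
  qed measurable
  define F where "F = (\<lambda>t. \<integral>z. w z * exp (t * u z) \<partial>M)"
  have "((\<lambda>y. (F y - F s) / (y - s)) \<longlongrightarrow> (\<integral>z. w z * u z * exp (s * u z) \<partial>M)) (at s within {s-e<..<s+e})"
  proof (subst tendsto_at_iff_sequentially, intro allI impI)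
    fix X :: "nat \<Rightarrow> real"
    assume X: "\<forall>i. X i \<in> {s-e<..<s+e} - {s}" and Xl: "X \<longlonglongrightarrow> s"
    define D where "D i z = w z * ((exp (X i * u z) - exp (s * u z)) / (X i - s))" for i z
    have XI: "X i \<in> {a<..<b}" for i
    proof -
      have "s - e < X i" "X i < s + e" using X by auto
      thus ?thesis using e by auto
    qed
    have sI: "s \<in> {a<..<b}" using s .
    have eq: "((\<lambda>y. (F y - F s) / (y - s)) \<circ> X) i = (\<integral>z. D i z \<partial>M)" for i
    proof -
      have "(\<integral>z. D i z \<partial>M) = (\<integral>z. (w z * exp (X i * u z) - w z * exp (s * u z)) / (X i - s) \<partial>M)"
        unfolding D_def by (rule Bochner_Integration.integral_cong) (auto simp: field_simps)
      also have "\<dots> = (\<integral>z. (w z * exp (X i * u z) - w z * exp (s * u z)) \<partial>M) / (X i - s)"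
        by simp
      also have "\<dots> = (F (X i) - F s) / (X i - s)"
        unfolding F_def using int[OF XI] int[OF sI] by (subst Bochner_Integration.integral_diff) auto
      finally show ?thesis by simp
    qed
    have "(\<lambda>i. \<integral>z. D i z \<partial>M) \<longlonglongrightarrow> (\<integral>z. w z * u z * exp (s * u z) \<partial>M)"
    proof (rule integral_dominated_convergence[where w=B])
      show "(\<lambda>z. w z * u z * exp (s * u z)) \<in> borel_measurable M" by measurable
      show "\<And>i. D i \<in> borel_measurable M" unfolding D_def by measurable
      show "integrable M B" by (rule Bint)
      show "AE z in M. (\<lambda>i. D i z) \<longlonglongrightarrow> w z * u z * exp (s * u z)"
      proof (rule AE_I2)
        fix z
        have "((\<lambda>t. exp (t * u z)) has_real_derivative exp (s * u z) * u z) (at s)"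
          by (auto intro!: derivative_eq_intros)
        hence "((\<lambda>y. (exp (y * u z) - exp (s * u z)) / (y - s)) \<longlongrightarrow> exp (s * u z) * u z) (at s)"
          by (simp add: has_field_derivative_iff)
        hence "((\<lambda>y. (exp (y * u z) - exp (s * u z)) / (y - s)) \<circ> X) \<longlonglongrightarrow> exp (s * u z) * u z"
          using X Xl by (subst (asm) tendsto_at_iff_sequentially) auto
        hence "(\<lambda>i. w z * ((exp (X i * u z) - exp (s * u z)) / (X i - s))) \<longlonglongrightarrow> w z * (exp (s * u z) * u z)"
          by (intro tendsto_mult tendsto_const) (simp add: comp_def)
        thus "(\<lambda>i. D i z) \<longlonglongrightarrow> w z * u z * exp (s * u z)"
          by (simp add: D_def mult_ac)
      qed
      show "AE z in M. norm (D i z) \<le> B z" for i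
      proof (rule AE_I2)
        fix z assume z: "z \<in> space M"
        have "\<bar>X i - s\<bar> \<le> e" "X i \<noteq> s" using X[rule_format, of i] by auto
        hence "\<bar>(exp (X i * u z) - exp (s * u z)) / (X i - s)\<bar> \<le> (exp ((s + 2*e) * u z) + exp ((s - 2*e) * u z)) / e"
          using dq_exp_bound e by blast
        hence "w z * \<bar>(exp (X i * u z) - exp (s * u z)) / (X i - s)\<bar> \<le> w z * ((exp ((s + 2*e) * u z) + exp ((s - 2*e) * u z)) / e)"
          using wpos[OF z] by (intro mult_left_mono)
        thus "norm (D i z) \<le> B z" using wpos[OF z] by (simp add: D_def B_def abs_mult)
      qed
    qed
    moreover have "((\<lambda>y. (F y - F s) / (y - s)) \<circ> X) = (\<lambda>i. \<integral>z. D i z \<partial>M)"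
      using eq by (intro ext)
    ultimately show "((\<lambda>y. (F y - F s) / (y - s)) \<circ> X) \<longlonglongrightarrow> (\<integral>z. w z * u z * exp (s * u z) \<partial>M)"
      by simp
  qed
  hence "(F has_real_derivative (\<integral>z. w z * u z * exp (s * u z) \<partial>M)) (at s within {s-e<..<s+e})"
    by (simp add: has_field_derivative_iff)
  moreover have "at s within {s-e<..<s+e} = at s" using e by (intro at_within_open) auto
  ultimately show "((\<lambda>t. \<integral>z. w z * exp (t * u z) \<partial>M) has_real_derivative (\<integral>z. w z * u z * exp (s * u z) \<partial>M)) (at s)"
    unfolding F_def by simp
qed




lemma lborel_translate:
  fixes f :: "'k::euclidean_space \<Rightarrow> real" and c :: 'k
  assumes f[measurable]: "f \<in> borel_measurable borel"
  shows "(\<integral>x. f (x + c) \<partial>lborel) = (\<integral>x. f x \<partial>lborel)"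
    and "integrable lborel (\<lambda>x. f (x + c)) \<longleftrightarrow> integrable lborel f"
proof -
  have m: "(+) c \<in> measurable lborel borel" by simp
  have "(\<integral>x. f x \<partial>lborel) = (\<integral>x. f x \<partial>(distr lborel borel ((+) c)))"
    by (simp only: lborel_distr_plus)
  also have "\<dots> = (\<integral>x. f (c + x) \<partial>lborel)"
    by (rule integral_distr[OF m f])
  finally show "(\<integral>x. f (x + c) \<partial>lborel) = (\<integral>x. f x \<partial>lborel)" by (simp add: add.commute)
  have "integrable lborel f \<longleftrightarrow> integrable (distr lborel borel ((+) c)) f"
    by (simp only: lborel_distr_plus)
  also have "\<dots> \<longleftrightarrow> integrable lborel (\<lambda>x. f (c + x))"
    by (rule integrable_distr_eq[OF m f])
  finally show "integrable lborel (\<lambda>x. f (x + c)) \<longleftrightarrow> integrable lborel f" by (simp add: add.commute)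
qed

lemma core_translation:
  fixes G q :: "'k::euclidean_space \<Rightarrow> real" and d :: 'k
  assumes Gi: "integrable lborel G" and qi: "integrable lborel q"
    and ftc: "\<And>x. integrable lborel (\<lambda>s. indicator {0..1} s * G (x + s *\<^sub>R d)) \<Longrightarrow>
               q (x + d) - q x = (\<integral>s. indicator {0..1} s * G (x + s *\<^sub>R d) \<partial>lborel)"
  shows "(\<integral>x. G x \<partial>lborel) = 0"
proof -
  have Gm[measurable]: "G \<in> borel_measurable borel" using Gi by (simp add: borel_measurable_integrable)
  have qm[measurable]: "q \<in> borel_measurable borel" using qi by (simp add: borel_measurable_integrable)
  define f where "f s x = indicator {0..1::real} s * G (x + s *\<^sub>R d)" for s x
  have fm[measurable]: "(\<lambda>(s, x). f s x) \<in> borel_measurable (lborel \<Otimes>\<^sub>M lborel)"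
    unfolding f_def by measurable
  have Gti: "integrable lborel (\<lambda>x. G (x + s *\<^sub>R d))" for s
    using lborel_translate(2)[OF Gm, of "s *\<^sub>R d"] Gi by simp
  have Gam: "(\<lambda>x. \<bar>G x\<bar>) \<in> borel_measurable borel" by measurable
  have Gnt: "(\<integral>x. \<bar>G (x + s *\<^sub>R d)\<bar> \<partial>lborel) = (\<integral>x. \<bar>G x\<bar> \<partial>lborel)" for s
    using lborel_translate(1)[OF Gam, of "s *\<^sub>R d"] by simp
  have int: "integrable (lborel \<Otimes>\<^sub>M lborel) (\<lambda>(s, x). f s x)"
  proof (rule lborel_pair.Fubini_integrable)
    show "(\<lambda>(s, x). f s x) \<in> borel_measurable (lborel \<Otimes>\<^sub>M lborel)" by (rule fm)
    have "(\<lambda>s. \<integral>x. norm (case (s, x) of (s, x) \<Rightarrow> f s x) \<partial>lborel)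
        = (\<lambda>s. indicator {0..1::real} s * (\<integral>x. \<bar>G x\<bar> \<partial>lborel))"
      by (rule ext) (simp add: f_def Gnt abs_mult indicator_def)
    moreover have "integrable lborel (\<lambda>s. indicator {0..1::real} s * (\<integral>x. \<bar>G x\<bar> \<partial>lborel))"
      by (intro integrable_mult_left integrable_real_indicator) auto
    ultimately show "integrable lborel (\<lambda>s. \<integral>x. norm (case (s, x) of (s, x) \<Rightarrow> f s x) \<partial>lborel)"
      by simp
    show "AE s in lborel. integrable lborel (\<lambda>x. case (s, x) of (s, x) \<Rightarrow> f s x)"
      by (intro AE_I2) (simp add: f_def Gti)
  qed
  have "(\<integral>x. (\<integral>s. f s x \<partial>lborel) \<partial>lborel) = (\<integral>s. (\<integral>x. f s x \<partial>lborel) \<partial>lborel)"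
    by (rule lborel_pair.Fubini_integral[OF int])
  also have "\<dots> = (\<integral>s. indicator {0..1::real} s * (\<integral>x. G x \<partial>lborel) \<partial>lborel)"
    by (rule Bochner_Integration.integral_cong[OF refl])
       (simp add: f_def lborel_translate(1)[OF Gm])
  also have "\<dots> = (\<integral>x. G x \<partial>lborel)" by simp
  finally have e1: "(\<integral>x. (\<integral>s. f s x \<partial>lborel) \<partial>lborel) = (\<integral>x. G x \<partial>lborel)" .
  have "AE x in lborel. integrable lborel (\<lambda>s. f s x)"
    by (rule lborel_pair.AE_integrable_snd[OF int])
  hence "AE x in lborel. q (x + d) - q x = (\<integral>s. f s x \<partial>lborel)"
    by eventually_elim (simp add: f_def ftc)
  hence "(\<integral>x. q (x + d) - q x \<partial>lborel) = (\<integral>x. (\<integral>s. f s x \<partial>lborel) \<partial>lborel)"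
    by (intro integral_cong_AE) auto
  moreover have "(\<integral>x. q (x + d) - q x \<partial>lborel) = 0"
  proof -
    have "integrable lborel (\<lambda>x. q (x + d))" using lborel_translate(2)[OF qm] qi by simp
    hence "(\<integral>x. q (x + d) - q x \<partial>lborel) = (\<integral>x. q (x + d) \<partial>lborel) - (\<integral>x. q x \<partial>lborel)"
      using qi by (rule Bochner_Integration.integral_diff)
    thus ?thesis using lborel_translate(1)[OF qm] by simp
  qed
  ultimately show ?thesis using e1 by simp
qed




lemma convex_closure_boundary_real:
  fixes J :: "real set"
  assumes cJ: "convex J" and sc: "s \<in> closure J" and sn: "s \<notin> J"
  shows "s = Inf J \<or> s = Sup J"
proof -
  have iJ: "is_interval J" using cJ by (simp add: is_interval_convex_1)
  have Jne: "J \<noteq> {}" using sc by auto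
  have "(\<forall>a\<in>J. s \<le> a) \<or> (\<forall>b\<in>J. b \<le> s)"
  proof (rule ccontr)
    assume "\<not> ?thesis"
    then obtain a b where "a \<in> J" "b \<in> J" "a < s" "s < b" by (auto simp: not_le)
    hence "s \<in> J" using iJ unfolding is_interval_1 by (meson less_imp_le)
    thus False using sn by simp
  qed
  thus ?thesis
  proof
    assume H: "\<forall>a\<in>J. s \<le> a"
    hence bb: "bdd_below J" by (auto simp: bdd_below_def)
    have "s \<le> Inf J" using H Jne by (intro cInf_greatest) auto
    moreover have "closure J \<subseteq> {Inf J..}"
      by (rule closure_minimal) (auto intro: cInf_lower[OF _ bb])
    hence "Inf J \<le> s" using sc by auto
    ultimately show ?thesis by simp
  next
    assume H: "\<forall>b\<in>J. b \<le> s"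
    hence bb: "bdd_above J" by (auto simp: bdd_above_def)
    have "Sup J \<le> s" using H Jne by (intro cSup_least) auto
    moreover have "closure J \<subseteq> {..Sup J}"
      by (rule closure_minimal) (auto intro: cSup_upper[OF _ bb])
    hence "s \<le> Sup J" using sc by auto
    ultimately show ?thesis by simp
  qed
qed

lemma slice_ftc:
  fixes q G :: "'k::euclidean_space \<Rightarrow> real" and Om :: "'k set" and x d :: 'k
  assumes oOm: "open Om" and cOm: "convex Om"
    and q0: "\<And>y. y \<notin> Om \<Longrightarrow> q y = 0"
    and G0: "\<And>y. y \<notin> Om \<Longrightarrow> G y = 0"
    and cont: "\<And>y. y \<notin> Om \<Longrightarrow> (q \<longlongrightarrow> 0) (at y)"
    and der: "\<And>y. y \<in> Om \<Longrightarrow> ((\<lambda>t. q (y + t *\<^sub>R d)) has_real_derivative G y) (at 0)"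
    and int: "integrable lborel (\<lambda>s. indicator {0..1} s * G (x + s *\<^sub>R d))"
  shows "q (x + d) - q x = (\<integral>s. indicator {0..1} s * G (x + s *\<^sub>R d) \<partial>lborel)"
proof -
  define \<psi> where "\<psi> s = q (x + s *\<^sub>R d)" for s
  define J where "J = {s. x + s *\<^sub>R d \<in> Om}"
  have cJ: "convex J" unfolding J_def convex_def
  proof (intro ballI allI impI, clarsimp)
    fix u v a b :: real
    assume "x + u *\<^sub>R d \<in> Om" "x + v *\<^sub>R d \<in> Om" "0 \<le> a" "0 \<le> b" "a + b = 1"
    hence "a *\<^sub>R (x + u *\<^sub>R d) + b *\<^sub>R (x + v *\<^sub>R d) \<in> Om" by (intro convexD[OF cOm])
    moreover have "a *\<^sub>R (x + u *\<^sub>R d) + b *\<^sub>R (x + v *\<^sub>R d) = (a + b) *\<^sub>R x + (a * u + b * v) *\<^sub>R d"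
      by (simp add: algebra_simps)
    hence "a *\<^sub>R (x + u *\<^sub>R d) + b *\<^sub>R (x + v *\<^sub>R d) = x + (a * u + b * v) *\<^sub>R d"
      using \<open>a + b = 1\<close> by simp
    ultimately show "x + (a * u + b * v) *\<^sub>R d \<in> Om" by simp
  qed
  have derJ: "(\<psi> has_real_derivative G (x + s *\<^sub>R d)) (at s)" if "s \<in> J" for s
  proof -
    have "((\<lambda>t. q ((x + s *\<^sub>R d) + t *\<^sub>R d)) has_real_derivative G (x + s *\<^sub>R d)) (at 0)"
      using der that by (simp add: J_def)
    moreover have "(\<lambda>t. q ((x + s *\<^sub>R d) + t *\<^sub>R d)) = (\<lambda>t. \<psi> (t + s))"
      by (rule ext) (simp add: \<psi>_def algebra_simps scaleR_add_left)
    ultimately have "((\<lambda>t. \<psi> (t + s)) has_real_derivative G (x + s *\<^sub>R d)) (at 0)" by simp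
    thus ?thesis using DERIV_shift[of \<psi> "G (x + s *\<^sub>R d)" 0 s] by simp
  qed
  have outside: "\<exists>S. open S \<and> s \<in> S \<and> S \<inter> J = {}" if "s \<notin> closure J" for s
    using that by (intro exI[of _ "- closure J"]) (auto dest: closure_subset[THEN subsetD])
  have derN: "(\<psi> has_real_derivative G (x + s *\<^sub>R d)) (at s)"
    if sn: "s \<notin> closure J" for s
  proof -
    obtain S where S: "open S" "s \<in> S" "S \<inter> J = {}" using outside[OF sn] by blast
    have sJ: "s \<notin> J" using S by auto
    hence "G (x + s *\<^sub>R d) = 0" using G0 by (simp add: J_def)
    moreover have "((\<lambda>_. 0) has_real_derivative 0) (at s)" by simp
    hence "(\<psi> has_real_derivative 0) (at s)"
    proof (rule has_field_derivative_transform_within_open[OF _ S(1,2)])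
      fix z assume "z \<in> S" hence "z \<notin> J" using S by auto
      thus "0 = \<psi> z" using q0 by (simp add: J_def \<psi>_def)
    qed
    ultimately show ?thesis by simp
  qed
  have contpsi: "isCont \<psi> s" for s
  proof (cases "s \<in> J")
    case True thus ?thesis using derJ DERIV_isCont by blast
  next
    case False
    hence y: "x + s *\<^sub>R d \<notin> Om" by (simp add: J_def)
    have "isCont q (x + s *\<^sub>R d)" unfolding isCont_def using cont[OF y] q0[OF y] by simp
    moreover have "isCont (\<lambda>s. x + s *\<^sub>R d) s" by (intro continuous_intros)
    ultimately show ?thesis unfolding \<psi>_def by (rule isCont_o2[rotated])
  qed
  have "((\<lambda>s. G (x + s *\<^sub>R d)) has_integral (\<psi> 1 - \<psi> 0)) {0..1}"
  proof (rule fundamental_theorem_of_calculus_interior_strong[where S="{Inf J, Sup J}"])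
    show "finite {Inf J, Sup J}" by simp
    show "(0::real) \<le> 1" by simp
    show "continuous_on {0..1} \<psi>" using contpsi by (intro continuous_at_imp_continuous_on) auto
    fix s assume s: "s \<in> {0<..<1} - {Inf J, Sup J}"
    show "(\<psi> has_vector_derivative G (x + s *\<^sub>R d)) (at s)"
      unfolding has_real_derivative_iff_has_vector_derivative[symmetric]
    proof (cases "s \<in> J")
      case True thus "(\<psi> has_real_derivative G (x + s *\<^sub>R d)) (at s)" by (rule derJ)
    next
      case False
      have "s \<notin> closure J"
        using convex_closure_boundary_real[OF cJ _ False] s by auto
      thus "(\<psi> has_real_derivative G (x + s *\<^sub>R d)) (at s)" by (rule derN)
    qed
  qed
  hence "integral {0..1} (\<lambda>s. G (x + s *\<^sub>R d)) = \<psi> 1 - \<psi> 0" by (rule integral_unique)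
  moreover have "set_integrable lborel {0..1} (\<lambda>s. G (x + s *\<^sub>R d))"
    using int by (simp add: set_integrable_def)
  hence "(LINT s:{0..1}|lborel. G (x + s *\<^sub>R d)) = integral {0..1} (\<lambda>s. G (x + s *\<^sub>R d))"
    by (rule set_borel_integral_eq_integral(2))
  ultimately show ?thesis by (simp add: set_lebesgue_integral_def \<psi>_def)
qed




lemma ef_convex:
  fixes h :: "'z \<Rightarrow> real" and T :: "'z \<Rightarrow> 'k::euclidean_space"
  assumes hm[measurable]: "h \<in> borel_measurable M" and Tm[measurable]: "T \<in> borel_measurable M"
    and hpos: "\<And>z. z \<in> space M \<Longrightarrow> 0 \<le> h z"
  shows "convex (nat_param_space M h T)"
  unfolding convex_def nat_param_space_def
proof (intro ballI allI impI, clarsimp)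
  fix x y :: 'k and u v :: real
  assume ix: "integrable M (\<lambda>z. h z * exp (x \<bullet> T z))" and iy: "integrable M (\<lambda>z. h z * exp (y \<bullet> T z))"
    and u: "0 \<le> u" and v: "0 \<le> v" and uv: "u + v = 1"
  have "integrable M (\<lambda>z. u * (h z * exp (x \<bullet> T z)) + v * (h z * exp (y \<bullet> T z)))"
    using ix iy by auto
  thus "integrable M (\<lambda>z. h z * exp ((u *\<^sub>R x + v *\<^sub>R y) \<bullet> T z))"
  proof (rule Bochner_Integration.integrable_bound)
    show "AE z in M. norm (h z * exp ((u *\<^sub>R x + v *\<^sub>R y) \<bullet> T z))
        \<le> norm (u * (h z * exp (x \<bullet> T z)) + v * (h z * exp (y \<bullet> T z)))"
    proof (rule AE_I2)
      fix z assume z: "z \<in> space M"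
      have "exp ((u *\<^sub>R x + v *\<^sub>R y) \<bullet> T z) = exp ((1 - v) *\<^sub>R (x \<bullet> T z) + v *\<^sub>R (y \<bullet> T z))"
      proof -
        have ue: "u = 1 - v" using uv by simp
        show ?thesis unfolding ue by (simp add: inner_add_left algebra_simps)
      qed
      also have "\<dots> \<le> (1 - v) * exp (x \<bullet> T z) + v * exp (y \<bullet> T z)"
        using convex_onD[OF exp_convex, of v] u v uv by auto
      also have "1 - v = u" using uv by simp
      finally have "exp ((u *\<^sub>R x + v *\<^sub>R y) \<bullet> T z) \<le> u * exp (x \<bullet> T z) + v * exp (y \<bullet> T z)" .
      hence "h z * exp ((u *\<^sub>R x + v *\<^sub>R y) \<bullet> T z) \<le> h z * (u * exp (x \<bullet> T z) + v * exp (y \<bullet> T z))"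
        using hpos[OF z] by (rule mult_left_mono)
      moreover have "0 \<le> h z * exp ((u *\<^sub>R x + v *\<^sub>R y) \<bullet> T z)" using hpos[OF z] by simp
      ultimately show "norm (h z * exp ((u *\<^sub>R x + v *\<^sub>R y) \<bullet> T z))
        \<le> norm (u * (h z * exp (x \<bullet> T z)) + v * (h z * exp (y \<bullet> T z)))"
        by (simp add: algebra_simps)
    qed
  qed measurable
qed

lemma ef_deriv:
  fixes h :: "'z \<Rightarrow> real" and T :: "'z \<Rightarrow> 'k::euclidean_space"
  assumes hm[measurable]: "h \<in> borel_measurable M" and Tm[measurable]: "T \<in> borel_measurable M"
    and hpos: "\<And>z. z \<in> space M \<Longrightarrow> 0 \<le> h z"
    and oOm: "open (nat_param_space M h T)"
    and y: "y \<in> nat_param_space M h T"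
  shows "integrable M (\<lambda>z. h z * (d \<bullet> T z) * exp (y \<bullet> T z))"
    and "((\<lambda>t. \<integral>z. h z * exp ((y + t *\<^sub>R d) \<bullet> T z) \<partial>M) has_real_derivative
          (\<integral>z. h z * (d \<bullet> T z) * exp (y \<bullet> T z) \<partial>M)) (at 0)"
proof -
  define J where "J = (\<lambda>t::real. y + t *\<^sub>R d) -` nat_param_space M h T"
  have "open J" unfolding J_def
    by (rule continuous_open_vimage[OF oOm]) (intro continuous_intros)
  moreover have "0 \<in> J" using y by (simp add: J_def)
  ultimately obtain e where e: "0 < e" "ball 0 e \<subseteq> J" using open_contains_ball by blast
  define w where "w z = h z * exp (y \<bullet> T z)" for z
  define u where "u z = d \<bullet> T z" for z
  have wm[measurable]: "w \<in> borel_measurable M" unfolding w_def by measurable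
  have um[measurable]: "u \<in> borel_measurable M" unfolding u_def by measurable
  have eq: "h z * exp ((y + t *\<^sub>R d) \<bullet> T z) = w z * exp (t * u z)" for z t
    by (simp add: w_def u_def inner_add_left exp_add)
  have int: "integrable M (\<lambda>z. w z * exp (t * u z))" if "t \<in> {-e<..<e}" for t
  proof -
    have "t \<in> J" using that e by (auto simp: dist_real_def)
    hence "integrable M (\<lambda>z. h z * exp ((y + t *\<^sub>R d) \<bullet> T z))"
      by (simp add: J_def nat_param_space_def)
    thus ?thesis by (simp only: eq)
  qed
  have 0: "(0::real) \<in> {-e<..<e}" using e by simp
  note D = deriv_param_exp_integral[OF wm um _ int 0]
  have wpos: "\<And>z. z \<in> space M \<Longrightarrow> 0 \<le> w z" using hpos by (simp add: w_def)
  have "integrable M (\<lambda>z. w z * u z * exp (0 * u z))" by (rule D(1)[OF wpos])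
  thus "integrable M (\<lambda>z. h z * (d \<bullet> T z) * exp (y \<bullet> T z))"
    by (simp add: w_def u_def mult_ac)
  have "((\<lambda>t. \<integral>z. w z * exp (t * u z) \<partial>M) has_real_derivative (\<integral>z. w z * u z * exp (0 * u z) \<partial>M)) (at 0)"
    by (rule D(2)[OF wpos])
  moreover have "(\<lambda>t. \<integral>z. w z * exp (t * u z) \<partial>M) = (\<lambda>t. \<integral>z. h z * exp ((y + t *\<^sub>R d) \<bullet> T z) \<partial>M)"
    by (simp only: eq)
  moreover have "(\<integral>z. w z * u z * exp (0 * u z) \<partial>M) = (\<integral>z. h z * (d \<bullet> T z) * exp (y \<bullet> T z) \<partial>M)"
    by (simp add: w_def u_def mult_ac)
  ultimately show "((\<lambda>t. \<integral>z. h z * exp ((y + t *\<^sub>R d) \<bullet> T z) \<partial>M) has_real_derivative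
          (\<integral>z. h z * (d \<bullet> T z) * exp (y \<bullet> T z) \<partial>M)) (at 0)" by simp
qed




lemma bound_help:
  fixes K E A \<epsilon> N L :: real
  assumes "0 < K" "0 < E" "0 < \<epsilon>" "0 < N" "0 \<le> A" "A < E" "(ln (K * E / \<epsilon>) + 1) / N < L"
  shows "K * A * exp (- (N * L)) < \<epsilon>"
proof -
  have "ln (K * E / \<epsilon>) < N * L" using assms(4,7) by (simp add: field_simps)
  hence "exp (- (N * L)) < exp (- ln (K * E / \<epsilon>))" by simp
  also have "\<dots> = \<epsilon> / (K * E)" using assms by (simp add: exp_minus)
  finally have 1: "exp (- (N * L)) < \<epsilon> / (K * E)" .
  have "K * A * exp (- (N * L)) \<le> K * E * exp (- (N * L))"
    using assms by (intro mult_right_mono mult_left_mono) auto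
  also have "\<dots> < K * E * (\<epsilon> / (K * E))"
    using 1 assms by (intro mult_strict_left_mono) auto
  also have "\<dots> = \<epsilon>" using assms by simp
  finally show ?thesis .
qed

lemma ef_fatou:
  fixes h :: "'z \<Rightarrow> real" and T :: "'z \<Rightarrow> 'k::euclidean_space"
  assumes hm[measurable]: "h \<in> borel_measurable M" and Tm[measurable]: "T \<in> borel_measurable M"
    and hpos: "\<And>z. z \<in> space M \<Longrightarrow> 0 \<le> h z"
    and b: "b \<notin> nat_param_space M h T"
    and K: "0 < K" and N: "0 < N"
  shows "((\<lambda>y. indicator (nat_param_space M h T) y *
            (K * exp (y \<bullet> S - N * ln (\<integral>z. h z * exp (y \<bullet> T z) \<partial>M)))) \<longlongrightarrow> 0) (at b)"
proof (subst tendsto_at_iff_sequentially, intro allI impI)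
  fix X :: "nat \<Rightarrow> 'k" assume Xl: "X \<longlonglongrightarrow> b"
  define Om where "Om = nat_param_space M h T"
  define Fh where "Fh y = (\<integral>\<^sup>+z. ennreal (h z * exp (y \<bullet> T z)) \<partial>M)" for y
  define F where "F y = (\<integral>z. h z * exp (y \<bullet> T z) \<partial>M)" for y
  define q where "q y = indicator Om y * (K * exp (y \<bullet> S - N * ln (F y)))" for y
  have Fhb: "Fh b = \<infinity>"
  proof (rule ccontr)
    assume "Fh b \<noteq> \<infinity>"
    hence "(\<integral>\<^sup>+z. ennreal (norm (h z * exp (b \<bullet> T z))) \<partial>M) < \<infinity>"
      unfolding Fh_def
      by (subst nn_integral_cong[where v="\<lambda>z. ennreal (h z * exp (b \<bullet> T z))"])
         (auto simp: hpos top.not_eq_extremum)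
    hence "integrable M (\<lambda>z. h z * exp (b \<bullet> T z))" by (intro integrableI_bounded) auto
    thus False using b by (simp add: nat_param_space_def)
  qed
  have "Fh b \<le> liminf (\<lambda>i. Fh (X i))"
  proof -
    have lim: "liminf (\<lambda>i. ennreal (h z * exp (X i \<bullet> T z))) = ennreal (h z * exp (b \<bullet> T z))" for z
      by (rule lim_imp_Liminf) (auto intro!: tendsto_intros Xl)
    have "Fh b = (\<integral>\<^sup>+z. liminf (\<lambda>i. ennreal (h z * exp (X i \<bullet> T z))) \<partial>M)"
      unfolding Fh_def lim ..
    also have "\<dots> \<le> liminf (\<lambda>i. Fh (X i))"
      unfolding Fh_def by (rule nn_integral_liminf) measurable
    finally show ?thesis .
  qed
  hence big: "\<forall>y<\<infinity>. eventually (\<lambda>i. y < Fh (X i)) sequentially"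
    using Fhb by (simp add: le_Liminf_iff)
  have FhF: "Fh y = ennreal (F y)" if "y \<in> Om" for y
  proof -
    have "integrable M (\<lambda>z. h z * exp (y \<bullet> T z))" using that by (simp add: Om_def nat_param_space_def)
    thus ?thesis unfolding Fh_def F_def
      by (rule nn_integral_eq_integral) (auto intro!: AE_I2 simp: hpos)
  qed
  have qnn: "0 \<le> q y" for y using K by (simp add: q_def)
  have "(\<lambda>i. q (X i)) \<longlonglongrightarrow> 0"
  proof (rule order_tendstoI)
    fix a :: real assume "a < 0"
    thus "eventually (\<lambda>i. a < q (X i)) sequentially" using qnn by (intro always_eventually) (auto intro: less_le_trans)
  next
    fix \<epsilon> :: real assume \<epsilon>: "0 < \<epsilon>"
    define E where "E = exp (b \<bullet> S) + 1"
    have E: "0 < E" by (simp add: E_def add_pos_pos)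
    have "(\<lambda>i. exp (X i \<bullet> S)) \<longlonglongrightarrow> exp (b \<bullet> S)" by (intro tendsto_intros Xl)
    hence ev1: "eventually (\<lambda>i. exp (X i \<bullet> S) < E) sequentially"
      by (rule order_tendstoD) (simp add: E_def)
    define L where "L = (ln (K * E / \<epsilon>) + 1) / N + 1"
    have ev2: "eventually (\<lambda>i. ennreal (exp L) < Fh (X i)) sequentially"
      using big by simp
    show "eventually (\<lambda>i. q (X i) < \<epsilon>) sequentially"
      using ev1 ev2
    proof eventually_elim
      case (elim i)
      show ?case
      proof (cases "X i \<in> Om")
        case False thus ?thesis using \<epsilon> by (simp add: q_def)
      next
        case True
        have "ennreal (exp L) < ennreal (F (X i))" using elim(2) FhF[OF True] by simp
        hence FL: "exp L < F (X i)" by (subst (asm) ennreal_less_iff) auto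
        hence Fpos: "0 < F (X i)" using exp_gt_zero less_trans by blast
        have "L < ln (F (X i))" using FL Fpos by (metis ln_exp ln_less_cancel_iff exp_gt_zero)
        hence "(ln (K * E / \<epsilon>) + 1) / N < ln (F (X i))" unfolding L_def by simp
        hence "K * exp (X i \<bullet> S) * exp (- (N * ln (F (X i)))) < \<epsilon>"
          using bound_help[OF K E \<epsilon> N _ elim(1)] by simp
        thus ?thesis using True by (simp add: q_def exp_diff exp_minus field_simps)
      qed
    qed
  qed
  thus "((\<lambda>y. indicator (nat_param_space M h T) y *
            (K * exp (y \<bullet> S - N * ln (\<integral>z. h z * exp (y \<bullet> T z) \<partial>M)))) \<circ> X) \<longlonglongrightarrow> 0"
    by (simp add: q_def F_def Om_def comp_def)
qed




lemma ef_core: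
  fixes h :: "'z \<Rightarrow> real" and T :: "'z \<Rightarrow> 'k::euclidean_space" and S d :: 'k and K N :: real
  assumes hm[measurable]: "h \<in> borel_measurable M" and Tm[measurable]: "T \<in> borel_measurable M"
    and hpos: "\<And>z. z \<in> space M \<Longrightarrow> 0 \<le> h z"
    and oOm: "open (nat_param_space M h T)"
    and Fpos: "\<And>e. e \<in> nat_param_space M h T \<Longrightarrow> 0 < (\<integral>z. h z * exp (e \<bullet> T z) \<partial>M)"
    and K: "0 < K" and N: "0 < N"
    and qi: "integrable lborel (\<lambda>y. indicator (nat_param_space M h T) y *
               (K * exp (y \<bullet> S - N * ln (\<integral>z. h z * exp (y \<bullet> T z) \<partial>M))))"
    and mi: "integrable lborel (\<lambda>y. indicator (nat_param_space M h T) y *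
               ((\<integral>z. h z * (d \<bullet> T z) * exp (y \<bullet> T z) \<partial>M) / (\<integral>z. h z * exp (y \<bullet> T z) \<partial>M) *
               (K * exp (y \<bullet> S - N * ln (\<integral>z. h z * exp (y \<bullet> T z) \<partial>M)))))"
  shows "(\<integral>y. indicator (nat_param_space M h T) y *
               ((\<integral>z. h z * (d \<bullet> T z) * exp (y \<bullet> T z) \<partial>M) / (\<integral>z. h z * exp (y \<bullet> T z) \<partial>M) *
               (K * exp (y \<bullet> S - N * ln (\<integral>z. h z * exp (y \<bullet> T z) \<partial>M)))) \<partial>lborel)
       = (d \<bullet> S / N) * (\<integral>y. indicator (nat_param_space M h T) y *
               (K * exp (y \<bullet> S - N * ln (\<integral>z. h z * exp (y \<bullet> T z) \<partial>M))) \<partial>lborel)"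
proof -
  define Om where "Om = nat_param_space M h T"
  define F where "F = (\<lambda>y. (\<integral>z. h z * exp (y \<bullet> T z) \<partial>M))"
  define F1 where "F1 = (\<lambda>y. (\<integral>z. h z * (d \<bullet> T z) * exp (y \<bullet> T z) \<partial>M))"
  define qv where "qv = (\<lambda>y. K * exp (y \<bullet> S - N * ln (F y)))"
  define q where "q = (\<lambda>y. indicator Om y * qv y)"
  define mq where "mq = (\<lambda>y. indicator Om y * (F1 y / F y * qv y))"
  define G where "G = (\<lambda>y. (d \<bullet> S) * q y - N * mq y)"
  have qi': "integrable lborel q" using qi by (simp add: q_def qv_def F_def Om_def)
  have mi': "integrable lborel mq" using mi by (simp add: mq_def qv_def F_def F1_def Om_def)
  have Gi: "integrable lborel G" unfolding G_def using qi' mi' by auto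
  have oOm': "open Om" using oOm by (simp add: Om_def)
  have cOm: "convex Om" unfolding Om_def by (rule ef_convex[OF hm Tm hpos])
  have q0: "q y = 0" if "y \<notin> Om" for y using that by (simp add: q_def)
  have G0: "G y = 0" if "y \<notin> Om" for y using that by (simp add: G_def q_def mq_def)
  have cont: "(q \<longlongrightarrow> 0) (at y)" if "y \<notin> Om" for y
  proof -
    have "((\<lambda>y. indicator (nat_param_space M h T) y *
            (K * exp (y \<bullet> S - N * ln (\<integral>z. h z * exp (y \<bullet> T z) \<partial>M)))) \<longlongrightarrow> 0) (at y)"
    proof (rule ef_fatou[OF hm Tm hpos _ K N])
      show "y \<notin> nat_param_space M h T" using that unfolding Om_def .
    qed
    moreover have "(\<lambda>y. indicator (nat_param_space M h T) y *
            (K * exp (y \<bullet> S - N * ln (\<integral>z. h z * exp (y \<bullet> T z) \<partial>M)))) = q"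
      by (rule ext) (simp add: q_def qv_def F_def Om_def)
    ultimately show ?thesis by simp
  qed
  have der: "((\<lambda>t. q (y + t *\<^sub>R d)) has_real_derivative G y) (at 0)" if y: "y \<in> Om" for y
  proof -
    have yO: "y \<in> nat_param_space M h T" using y by (simp add: Om_def)
    define \<phi> where "\<phi> = (\<lambda>t. F (y + t *\<^sub>R d))"
    have dphi: "(\<phi> has_real_derivative F1 y) (at 0)"
      using ef_deriv(2)[OF hm Tm hpos oOm yO, of d] unfolding \<phi>_def[abs_def] F_def F1_def .
    have phi0: "\<phi> 0 = F y" by (simp add: \<phi>_def)
    have Fy: "0 < F y" using Fpos[OF yO] by (simp add: F_def)
    define g where "g = (\<lambda>t. K * exp (y \<bullet> S + t * (d \<bullet> S) - N * ln (\<phi> t)))"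
    have dg: "(g has_real_derivative K * exp (y \<bullet> S + 0 * (d \<bullet> S) - N * ln (\<phi> 0)) * (d \<bullet> S - N * (F1 y / \<phi> 0))) (at 0)"
      unfolding g_def using dphi phi0 Fy
      by (auto intro!: derivative_eq_intros simp: field_simps)
    have "G y = K * exp (y \<bullet> S + 0 * (d \<bullet> S) - N * ln (\<phi> 0)) * (d \<bullet> S - N * (F1 y / \<phi> 0))"
      using y phi0 by (simp add: G_def q_def mq_def qv_def algebra_simps)
    hence dg': "(g has_real_derivative G y) (at 0)" using dg by simp
    define U where "U = (\<lambda>t::real. y + t *\<^sub>R d) -` Om"
    have oU: "open U" unfolding U_def
      by (rule continuous_open_vimage[OF oOm']) (intro continuous_intros)
    have U0: "0 \<in> U" using y by (simp add: U_def)
    show ?thesis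
    proof (rule has_field_derivative_transform_within_open[OF dg' oU U0])
      fix t assume "t \<in> U"
      hence "y + t *\<^sub>R d \<in> Om" by (simp add: U_def)
      thus "g t = q (y + t *\<^sub>R d)"
        by (simp add: g_def q_def qv_def \<phi>_def inner_add_left)
    qed
  qed
  have "(\<integral>y. G y \<partial>lborel) = 0"
  proof (rule core_translation[OF Gi qi'])
    fix x assume "integrable lborel (\<lambda>s. indicator {0..1} s * G (x + s *\<^sub>R d))"
    thus "q (x + d) - q x = (\<integral>s. indicator {0..1} s * G (x + s *\<^sub>R d) \<partial>lborel)"
      using slice_ftc[OF oOm' cOm q0 G0 cont der] by simp
  qed
  moreover have "(\<integral>y. G y \<partial>lborel) = (d \<bullet> S) * (\<integral>y. q y \<partial>lborel) - N * (\<integral>y. mq y \<partial>lborel)"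
    unfolding G_def using qi' mi' by simp
  ultimately have "(\<integral>y. mq y \<partial>lborel) = (d \<bullet> S / N) * (\<integral>y. q y \<partial>lborel)"
    using N by (simp add: field_simps)
  thus ?thesis by (simp add: mq_def q_def qv_def F_def F1_def Om_def)
qed




lemma pdf_eq: "expfam_pdf M h T e z = h z * (1 / (\<integral>z. h z * exp (e \<bullet> T z) \<partial>M)) * exp (e \<bullet> T z)"
  by (simp add: expfam_pdf_def expfam_g_def)

lemma loss_formula:
  assumes "0 < h z" "0 < (\<integral>z. h z * exp (e \<bullet> T z) \<partial>M)"
  shows "- ln (expfam_pdf M h T e z) = - ln (h z) + ln (\<integral>z. h z * exp (e \<bullet> T z) \<partial>M) - e \<bullet> T z"
  using assms by (simp add: pdf_eq ln_mult ln_div)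

lemma lik_p0_formula:
  fixes rr cc :: real and tau e :: "'k::euclidean_space"
  assumes Fpos: "0 < (\<integral>z. h z * exp (e \<bullet> T z) \<partial>M)" and cc: "0 < cc"
  shows "(\<Prod>i<n. expfam_pdf M h T e (Z i)) * ((expfam_g M h T e) powr rr * exp (e \<bullet> tau) / cc)
    = ((\<Prod>i<n. h (Z i)) / cc) * exp (e \<bullet> (tau + (\<Sum>i<n. T (Z i))) - (real n + rr) * ln (\<integral>z. h z * exp (e \<bullet> T z) \<partial>M))"
proof -
  define F where "F = (\<integral>z. h z * exp (e \<bullet> T z) \<partial>M)"
  have F: "0 < F" using Fpos by (simp add: F_def)
  have g: "expfam_g M h T e = exp (- ln F)" using F by (simp add: expfam_g_def F_def exp_minus inverse_eq_divide)
  have "(\<Prod>i<n. expfam_pdf M h T e (Z i)) = (\<Prod>i<n. h (Z i) * (exp (- ln F) * exp (e \<bullet> T (Z i))))"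
    by (rule prod.cong) (simp_all add: pdf_eq F_def[symmetric] exp_minus F field_simps)
  also have "\<dots> = (\<Prod>i<n. h (Z i)) * (\<Prod>i<n. exp (- ln F) * exp (e \<bullet> T (Z i)))"
    by (simp only: prod.distrib)
  also have "(\<Prod>i<n. exp (- ln F) * exp (e \<bullet> T (Z i))) = (\<Prod>i<n. exp (- ln F + e \<bullet> T (Z i)))"
    by (simp only: exp_add)
  also have "(\<Prod>i<n. exp (- ln F + e \<bullet> T (Z i))) = exp (\<Sum>i<n. - ln F + e \<bullet> T (Z i))"
    by (simp add: exp_sum)
  also have "(\<Sum>i<n. - ln F + e \<bullet> T (Z i)) = - (real n * ln F) + e \<bullet> (\<Sum>i<n. T (Z i))"
    by (simp add: sum.distrib inner_sum_right sum_subtractf)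
  finally have L: "(\<Prod>i<n. expfam_pdf M h T e (Z i)) = (\<Prod>i<n. h (Z i)) * exp (- (real n * ln F) + e \<bullet> (\<Sum>i<n. T (Z i)))" .
  have P: "(expfam_g M h T e) powr rr = exp (- (rr * ln F))"
    unfolding g powr_def by simp
  show ?thesis
    unfolding L P F_def[symmetric]
    by (simp add: inner_add_right algebra_simps flip: exp_add)
qed




lemma pop_diff:
  fixes h :: "'z \<Rightarrow> real" and T :: "'z \<Rightarrow> 'k::euclidean_space" and e ea eb :: 'k
  assumes hm[measurable]: "h \<in> borel_measurable M" and Tm[measurable]: "T \<in> borel_measurable M"
    and hpos: "\<And>z. z \<in> space M \<Longrightarrow> 0 \<le> h z"
    and oOm: "open (nat_param_space M h T)"
    and e: "e \<in> nat_param_space M h T"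
    and Fe: "0 < (\<integral>z. h z * exp (e \<bullet> T z) \<partial>M)"
    and Fa: "0 < (\<integral>z. h z * exp (ea \<bullet> T z) \<partial>M)"
    and Fb: "0 < (\<integral>z. h z * exp (eb \<bullet> T z) \<partial>M)"
    and ia: "integrable (expfam_dist M h T e) (\<lambda>z. - ln (expfam_pdf M h T ea z))"
    and ib: "integrable (expfam_dist M h T e) (\<lambda>z. - ln (expfam_pdf M h T eb z))"
  shows "(\<integral>z. - ln (expfam_pdf M h T ea z) \<partial>expfam_dist M h T e)
       - (\<integral>z. - ln (expfam_pdf M h T eb z) \<partial>expfam_dist M h T e)
       = (ln (\<integral>z. h z * exp (ea \<bullet> T z) \<partial>M) - ln (\<integral>z. h z * exp (eb \<bullet> T z) \<partial>M))
         - (\<integral>z. h z * ((ea - eb) \<bullet> T z) * exp (e \<bullet> T z) \<partial>M) / (\<integral>z. h z * exp (e \<bullet> T z) \<partial>M)"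
proof -
  define F where "F = (\<lambda>x. \<integral>z. h z * exp (x \<bullet> T z) \<partial>M)"
  define d where "d = ea - eb"
  define p where "p = (\<lambda>z. expfam_pdf M h T e z)"
  define la where "la = (\<lambda>z. - ln (expfam_pdf M h T ea z))"
  define lb where "lb = (\<lambda>z. - ln (expfam_pdf M h T eb z))"
  have FeF: "0 < F e" using Fe by (simp add: F_def)
  have pm[measurable]: "p \<in> borel_measurable M" unfolding p_def pdf_eq by measurable
  have lam[measurable]: "la \<in> borel_measurable M" unfolding la_def pdf_eq by measurable
  have lbm[measurable]: "lb \<in> borel_measurable M" unfolding lb_def pdf_eq by measurable
  have pnn: "AE z in M. 0 \<le> p z"
    using hpos Fe by (intro AE_I2) (simp add: p_def pdf_eq)
  have dist: "expfam_dist M h T e = density M p" by (simp add: expfam_dist_def p_def)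
  have ia': "integrable M (\<lambda>z. p z * la z)"
    using ia unfolding dist la_def[symmetric] by (subst (asm) integrable_density) (auto simp: pnn)
  have ib': "integrable M (\<lambda>z. p z * lb z)"
    using ib unfolding dist lb_def[symmetric] by (subst (asm) integrable_density) (auto simp: pnn)
  have IA: "(\<integral>z. la z \<partial>density M p) = (\<integral>z. p z * la z \<partial>M)"
    by (subst integral_density) (auto simp: pnn)
  have IB: "(\<integral>z. lb z \<partial>density M p) = (\<integral>z. p z * lb z \<partial>M)"
    by (subst integral_density) (auto simp: pnn)
  have pint: "integrable M (\<lambda>z. h z * exp (e \<bullet> T z))"
    using e by (simp add: nat_param_space_def)
  have pdint: "integrable M (\<lambda>z. h z * (d \<bullet> T z) * exp (e \<bullet> T z))"
    by (rule ef_deriv(1)[OF hm Tm hpos oOm e])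
  have pw: "p z * la z - p z * lb z = (ln (F ea) - ln (F eb)) * (h z * exp (e \<bullet> T z)) / F e
             - (h z * (d \<bullet> T z) * exp (e \<bullet> T z)) / F e" if z: "z \<in> space M" for z
  proof (cases "h z = 0")
    case True thus ?thesis by (simp add: p_def pdf_eq)
  next
    case False
    hence hz: "0 < h z" using hpos[OF z] by simp
    have "la z = - ln (h z) + ln (F ea) - ea \<bullet> T z"
      unfolding la_def F_def by (rule loss_formula[OF hz Fa])
    moreover have "lb z = - ln (h z) + ln (F eb) - eb \<bullet> T z"
      unfolding lb_def F_def by (rule loss_formula[OF hz Fb])
    ultimately have "la z - lb z = ln (F ea) - ln (F eb) - d \<bullet> T z"
      by (simp add: d_def inner_diff_left)
    moreover have "p z = h z * exp (e \<bullet> T z) / F e" by (simp add: p_def pdf_eq F_def)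
    ultimately have "p z * la z - p z * lb z = (h z * exp (e \<bullet> T z) / F e) * (ln (F ea) - ln (F eb) - d \<bullet> T z)"
      by (simp only: right_diff_distrib[symmetric])
    also have "\<dots> = (ln (F ea) - ln (F eb)) * (h z * exp (e \<bullet> T z)) / F e
             - (h z * (d \<bullet> T z) * exp (e \<bullet> T z)) / F e"
      using FeF by (simp add: field_simps)
    finally show ?thesis .
  qed
  have "(\<integral>z. la z \<partial>density M p) - (\<integral>z. lb z \<partial>density M p) = (\<integral>z. p z * la z - p z * lb z \<partial>M)"
    unfolding IA IB using ia' ib' by simp
  also have "\<dots> = (\<integral>z. (ln (F ea) - ln (F eb)) * (h z * exp (e \<bullet> T z)) / F e
             - (h z * (d \<bullet> T z) * exp (e \<bullet> T z)) / F e \<partial>M)"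
    by (rule Bochner_Integration.integral_cong[OF refl pw])
  also have "\<dots> = (ln (F ea) - ln (F eb)) * (\<integral>z. h z * exp (e \<bullet> T z) \<partial>M) / F e
             - (\<integral>z. h z * (d \<bullet> T z) * exp (e \<bullet> T z) \<partial>M) / F e"
    using pint pdint by simp
  also have "\<dots> = (ln (F ea) - ln (F eb)) - (\<integral>z. h z * (d \<bullet> T z) * exp (e \<bullet> T z) \<partial>M) / F e"
    using Fe by (simp add: F_def)
  finally show ?thesis by (simp add: dist la_def lb_def F_def d_def)
qed




lemma final_abstract:
  fixes Lhat R B :: "'p \<Rightarrow> real"
  assumes a: "0 < a" and eq: "\<forall>\<theta>\<in>\<Theta>. Lhat \<theta> + R \<theta> = c + a * B \<theta>"
  shows "bayes_optimal_reg \<Theta> Lhat R B \<and> perfect_reg \<Theta> Lhat R B"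
proof -
  have iff: "(Lhat x + R x \<le> Lhat y + R y) \<longleftrightarrow> (B x \<le> B y)" if "x \<in> \<Theta>" "y \<in> \<Theta>" for x y
    using eq that a by simp
  have bo: "bayes_optimal_reg \<Theta> Lhat R B"
    unfolding bayes_optimal_reg_def argmin_on_def using iff by blast
  moreover have "mono (\<lambda>x::real. c + a * x)" using a by (auto simp: mono_def)
  ultimately show ?thesis unfolding perfect_reg_def using eq by blast
qed

lemma arith_sum:
  fixes n r A L t u z NN :: real
  assumes "0 < n" "NN = n + r" "0 < NN"
  shows "(- A + n * L - t) / n + - (1 / n) * (- (r * L) + u - z) = (z - A) / n + (NN / n) * (L - (u + t) / NN)"
proof -
  have n0: "n \<noteq> 0" and N0: "NN \<noteq> 0" using assms by auto
  have 1: "(NN / n) * (L - (u + t) / NN) = (NN * L - (u + t)) / n"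
    using n0 N0 by (simp add: field_simps)
  show ?thesis unfolding 1 using n0 assms(2) by (simp add: field_simps)
qed

lemma reg_formula:
  fixes rr cc :: real and tau e :: "'k::euclidean_space"
  assumes Fpos: "0 < (\<integral>z. h z * exp (e \<bullet> T z) \<partial>M)" and cc: "0 < cc"
  shows "ln ((expfam_g M h T e) powr rr * exp (e \<bullet> tau) / cc)
      = - (rr * ln (\<integral>z. h z * exp (e \<bullet> T z) \<partial>M)) + e \<bullet> tau - ln cc"
proof -
  define F where "F = (\<integral>z. h z * exp (e \<bullet> T z) \<partial>M)"
  have F: "0 < F" using Fpos by (simp add: F_def)
  have g: "expfam_g M h T e = exp (- ln F)" using F by (simp add: expfam_g_def F_def exp_minus inverse_eq_divide)
  have P: "(expfam_g M h T e) powr rr = exp (- (rr * ln F))"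
    unfolding g powr_def by simp
  show ?thesis unfolding P F_def[symmetric] using cc
    by (simp add: ln_div ln_mult)
qed




theorem theorem2:
  fixes M :: "'z measure"
    and h :: "'z \<Rightarrow> real"
    and T :: "'z \<Rightarrow> 'k::euclidean_space"
    and \<eta> :: "'p \<Rightarrow> 'k"
    and \<Theta> :: "'p set"
    and n0 :: real and \<tau>0 :: 'k and Z0 :: real
    and n :: nat and Z :: "nat \<Rightarrow> 'z"
  defines "Om \<equiv> nat_param_space M h T"
    and "p0 \<equiv> (\<lambda>e. (expfam_g M h T e) powr n0 * exp (e \<bullet> \<tau>0) / Z0)"
    and "loss \<equiv> (\<lambda>z \<theta>. - ln (expfam_pdf M h T (\<eta> \<theta>) z))"
    and "lik \<equiv> (\<lambda>e. \<Prod>i<n. expfam_pdf M h T e (Z i))"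
  assumes h_meas: "h \<in> borel_measurable M"
    and h_nonneg: "\<forall>z\<in>space M. 0 \<le> h z"
    and T_meas: "T \<in> borel_measurable M"
    and Om_open: "open Om"
    and Om_norm: "\<forall>e\<in>Om. 0 < (\<integral>z. h z * exp (e \<bullet> T z) \<partial>M)"
    and \<eta>_Om: "\<eta> ` \<Theta> \<subseteq> Om"
    and n0_pos: "0 < n0"
    and Z0_int: "set_integrable lborel Om (\<lambda>e. (expfam_g M h T e) powr n0 * exp (e \<bullet> \<tau>0))"
    and Z0_def: "Z0 = (LINT e:Om|lborel. (expfam_g M h T e) powr n0 * exp (e \<bullet> \<tau>0))"
    and Z0_pos: "0 < Z0"
    and n_pos: "1 \<le> n"
    and Z_supp: "\<forall>i<n. Z i \<in> space M \<and> 0 < h (Z i)"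
    and post_int: "set_integrable lborel Om (\<lambda>e. lik e * p0 e)"
    and loss_int: "\<forall>\<theta>\<in>\<Theta>. \<forall>e\<in>Om. integrable (expfam_dist M h T e) (\<lambda>z. loss z \<theta>)"
    and Lbar_int: "\<forall>\<theta>\<in>\<Theta>. set_integrable lborel Om
                     (\<lambda>e. pop_loss loss (expfam_dist M h T e) \<theta> * lik e * p0 e)"
  shows "bayes_optimal_reg \<Theta> (emp_loss loss n Z) (\<lambda>\<theta>. - (1 / real n) * ln (p0 (\<eta> \<theta>)))
           (\<lambda>\<theta>. posterior_expectation Om p0 lik (\<lambda>e. pop_loss loss (expfam_dist M h T e) \<theta>))
       \<and> perfect_reg \<Theta> (emp_loss loss n Z) (\<lambda>\<theta>. - (1 / real n) * ln (p0 (\<eta> \<theta>)))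
           (\<lambda>\<theta>. posterior_expectation Om p0 lik (\<lambda>e. pop_loss loss (expfam_dist M h T e) \<theta>))"
proof -
  note hm[measurable] = h_meas and Tm[measurable] = T_meas
  have hpos: "\<And>z. z \<in> space M \<Longrightarrow> 0 \<le> h z" using h_nonneg by blast
  define F where "F = (\<lambda>e. \<integral>z. h z * exp (e \<bullet> T z) \<partial>M)"
  have oOm: "open (nat_param_space M h T)" using Om_open unfolding Om_def .
  have Fpos: "\<And>e. e \<in> nat_param_space M h T \<Longrightarrow> 0 < (\<integral>z. h z * exp (e \<bullet> T z) \<partial>M)"
    using Om_norm unfolding Om_def by blast
  have FposO: "\<And>e. e \<in> Om \<Longrightarrow> 0 < F e" using Fpos unfolding Om_def F_def by blast
  define N where "N = real n + n0"
  define S where "S = \<tau>0 + (\<Sum>i<n. T (Z i))"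
  define K where "K = (\<Prod>i<n. h (Z i)) / Z0"
  have Npos: "0 < N" using n0_pos by (simp add: N_def add_nonneg_pos)
  have npos: "0 < real n" using n_pos by simp
  have Kpos: "0 < K" unfolding K_def using Z0_pos Z_supp by (intro divide_pos_pos prod_pos) auto
  define qv where "qv = (\<lambda>e. K * exp (e \<bullet> S - N * ln (\<integral>z. h z * exp (e \<bullet> T z) \<partial>M)))"
  have LP: "lik e * p0 e = qv e" if e: "e \<in> Om" for e
  proof -
    have "0 < (\<integral>z. h z * exp (e \<bullet> T z) \<partial>M)" using Fpos e unfolding Om_def by blast
    from lik_p0_formula[OF this Z0_pos, where n=n and Z=Z and rr=n0 and tau=\<tau>0]
    show ?thesis unfolding lik_def p0_def qv_def K_def S_def N_def by simp
  qed
  have indLP: "indicator Om y * (lik y * p0 y) = indicator Om y * qv y" for y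
    using LP by (cases "y \<in> Om") auto
  have qi: "integrable lborel (\<lambda>y. indicator Om y * qv y)"
    using post_int unfolding set_integrable_def by (simp add: indLP)
  have Dq: "(LINT e:Om|lborel. lik e * p0 e) = (\<integral>y. indicator Om y * qv y \<partial>lborel)"
    unfolding set_lebesgue_integral_def by (simp add: indLP)
  have qvpos: "0 < qv y" for y using Kpos by (simp add: qv_def)
  have Dpos: "0 < (\<integral>y. indicator Om y * qv y \<partial>lborel)"
  proof -
    have nn: "AE y in lborel. 0 \<le> indicator Om y * qv y" using qvpos by (intro AE_I2) (simp add: less_imp_le)
    have "(\<integral>y. indicator Om y * qv y \<partial>lborel) \<noteq> 0"
    proof
      assume "(\<integral>y. indicator Om y * qv y \<partial>lborel) = 0"
      hence "AE y in lborel. indicator Om y * qv y = 0"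
        using integral_nonneg_eq_0_iff_AE[OF qi nn] by simp
      hence "AE y in lborel. indicator Om y *\<^sub>R ((expfam_g M h T y) powr n0 * exp (y \<bullet> \<tau>0)) = 0"
      proof eventually_elim
        case (elim y)
        show ?case
        proof (cases "y \<in> Om")
          case True
          hence "qv y = 0" using elim by simp
          thus ?thesis using qvpos[of y] by simp
        qed simp
      qed
      hence "Z0 = 0" unfolding Z0_def set_lebesgue_integral_def
        by (rule integral_eq_zero_AE)
      thus False using Z0_pos by simp
    qed
    moreover have "0 \<le> (\<integral>y. indicator Om y * qv y \<partial>lborel)"
      using nn by (rule integral_nonneg_AE)
    ultimately show ?thesis by simp
  qed
  define V where "V = (\<lambda>\<theta>. ln (F (\<eta> \<theta>)) - (\<eta> \<theta> \<bullet> S) / N)"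
  define Lbar where "Lbar = (\<lambda>\<theta>. posterior_expectation Om p0 lik (\<lambda>e. pop_loss loss (expfam_dist M h T e) \<theta>))"
  define P where "P = (\<lambda>\<theta> e. pop_loss loss (expfam_dist M h T e) \<theta>)"
  have key: "Lbar a - Lbar b = V a - V b" if a: "a \<in> \<Theta>" and b: "b \<in> \<Theta>" for a b
  proof -
    define ea where "ea = \<eta> a"
    define eb where "eb = \<eta> b"
    have eaO: "ea \<in> Om" and ebO: "eb \<in> Om" using \<eta>_Om a b by (auto simp: ea_def eb_def)
    have Fa: "0 < (\<integral>z. h z * exp (ea \<bullet> T z) \<partial>M)" using FposO[OF eaO] by (simp add: F_def)
    have Fb: "0 < (\<integral>z. h z * exp (eb \<bullet> T z) \<partial>M)" using FposO[OF ebO] by (simp add: F_def)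
    define F1 where "F1 = (\<lambda>e. \<integral>z. h z * ((ea - eb) \<bullet> T z) * exp (e \<bullet> T z) \<partial>M)"
    define cab where "cab = ln (F ea) - ln (F eb)"
    have PD: "P a e - P b e = cab - F1 e / F e" if e: "e \<in> Om" for e
    proof -
      have eO: "e \<in> nat_param_space M h T" using e unfolding Om_def .
      have ia: "integrable (expfam_dist M h T e) (\<lambda>z. - ln (expfam_pdf M h T ea z))"
        using loss_int a e unfolding loss_def ea_def by blast
      have ib: "integrable (expfam_dist M h T e) (\<lambda>z. - ln (expfam_pdf M h T eb z))"
        using loss_int b e unfolding loss_def eb_def by blast
      from pop_diff[OF hm Tm hpos oOm eO Fpos[OF eO] Fa Fb ia ib]
      show ?thesis unfolding P_def pop_loss_def loss_def cab_def F1_def F_def ea_def eb_def by simp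
    qed
    have pw: "indicator Om y * (F1 y / F y * qv y) = cab * (indicator Om y * (lik y * p0 y))
               - (indicator Om y * (P a y * lik y * p0 y) - indicator Om y * (P b y * lik y * p0 y))" for y
    proof (cases "y \<in> Om")
      case True
      have h1: "F1 y / F y = cab - (P a y - P b y)" using PD[OF True] by simp
      have h2: "P a y * lik y * p0 y = P a y * qv y" "P b y * lik y * p0 y = P b y * qv y"
        "lik y * p0 y = qv y" using LP[OF True] by (simp_all add: mult.assoc)
      have h3: "indicator Om y = (1::real)" using True by simp
      show ?thesis unfolding h1 h2 h3 by (simp add: algebra_simps)
    qed simp
    have Pai: "integrable lborel (\<lambda>y. indicator Om y * (P a y * lik y * p0 y))"
      using Lbar_int a unfolding set_integrable_def P_def by simp
    have Pbi: "integrable lborel (\<lambda>y. indicator Om y * (P b y * lik y * p0 y))"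
      using Lbar_int b unfolding set_integrable_def P_def by simp
    have LPi: "integrable lborel (\<lambda>y. indicator Om y * (lik y * p0 y))"
      using post_int unfolding set_integrable_def by simp
    have mi: "integrable lborel (\<lambda>y. indicator Om y * (F1 y / F y * qv y))"
      unfolding pw using Pai Pbi LPi by auto
    have core: "(\<integral>y. indicator Om y * (F1 y / F y * qv y) \<partial>lborel) = ((ea - eb) \<bullet> S / N) * (\<integral>y. indicator Om y * qv y \<partial>lborel)"
    proof -
      have qi': "integrable lborel (\<lambda>y. indicator (nat_param_space M h T) y *
               (K * exp (y \<bullet> S - N * ln (\<integral>z. h z * exp (y \<bullet> T z) \<partial>M))))"
        using qi unfolding qv_def Om_def .
      have mi': "integrable lborel (\<lambda>y. indicator (nat_param_space M h T) y *
               ((\<integral>z. h z * ((ea - eb) \<bullet> T z) * exp (y \<bullet> T z) \<partial>M) / (\<integral>z. h z * exp (y \<bullet> T z) \<partial>M) *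
               (K * exp (y \<bullet> S - N * ln (\<integral>z. h z * exp (y \<bullet> T z) \<partial>M)))))"
        using mi unfolding qv_def Om_def F1_def F_def .
      from ef_core[OF hm Tm hpos oOm Fpos Kpos Npos qi' mi']
      show ?thesis unfolding qv_def Om_def F1_def F_def .
    qed
    define D where "D = (\<integral>y. indicator Om y * qv y \<partial>lborel)"
    have Na: "(LINT e:Om|lborel. P a e * lik e * p0 e) = (\<integral>y. indicator Om y * (P a y * lik y * p0 y) \<partial>lborel)"
      unfolding set_lebesgue_integral_def by simp
    have Nb: "(LINT e:Om|lborel. P b e * lik e * p0 e) = (\<integral>y. indicator Om y * (P b y * lik y * p0 y) \<partial>lborel)"
      unfolding set_lebesgue_integral_def by simp
    have "(\<integral>y. indicator Om y * (P a y * lik y * p0 y) \<partial>lborel) - (\<integral>y. indicator Om y * (P b y * lik y * p0 y) \<partial>lborel)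
        = (\<integral>y. cab * (indicator Om y * (lik y * p0 y)) - indicator Om y * (F1 y / F y * qv y) \<partial>lborel)"
    proof -
      have "(\<integral>y. indicator Om y * (P a y * lik y * p0 y) \<partial>lborel) - (\<integral>y. indicator Om y * (P b y * lik y * p0 y) \<partial>lborel)
          = (\<integral>y. indicator Om y * (P a y * lik y * p0 y) - indicator Om y * (P b y * lik y * p0 y) \<partial>lborel)"
        using Pai Pbi by simp
      also have "\<dots> = (\<integral>y. cab * (indicator Om y * (lik y * p0 y)) - indicator Om y * (F1 y / F y * qv y) \<partial>lborel)"
      proof (rule Bochner_Integration.integral_cong[OF refl])
        fix y
        show "indicator Om y * (P a y * lik y * p0 y) - indicator Om y * (P b y * lik y * p0 y)
          = cab * (indicator Om y * (lik y * p0 y)) - indicator Om y * (F1 y / F y * qv y)"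
          using pw[of y] by linarith
      qed
      finally show ?thesis .
    qed
    also have "\<dots> = cab * D - ((ea - eb) \<bullet> S / N) * D"
      using LPi mi core by (simp add: D_def indLP)
    finally have ND: "(LINT e:Om|lborel. P a e * lik e * p0 e) - (LINT e:Om|lborel. P b e * lik e * p0 e)
        = (cab - (ea - eb) \<bullet> S / N) * D" unfolding Na Nb by (simp add: algebra_simps)
    have DD: "(LINT e:Om|lborel. lik e * p0 e) = D" using Dq by (simp add: D_def)
    have Dp: "0 < D" using Dpos by (simp add: D_def)
    have "Lbar a - Lbar b = ((LINT e:Om|lborel. P a e * lik e * p0 e) - (LINT e:Om|lborel. P b e * lik e * p0 e)) / D"
      unfolding Lbar_def posterior_expectation_def DD P_def by (simp add: diff_divide_distrib)
    also have "\<dots> = cab - (ea - eb) \<bullet> S / N" using ND Dp by simp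
    also have "\<dots> = V a - V b"
      by (simp add: V_def cab_def ea_def eb_def inner_diff_left diff_divide_distrib)
    finally show ?thesis .
  qed
  define C0 where "C0 = (ln Z0 - (\<Sum>i<n. ln (h (Z i)))) / real n"
  have sumf: "emp_loss loss n Z \<theta> + - (1 / real n) * ln (p0 (\<eta> \<theta>)) = C0 + (N / real n) * V \<theta>"
    if th: "\<theta> \<in> \<Theta>" for \<theta>
  proof -
    define e where "e = \<eta> \<theta>"
    have eO: "e \<in> Om" using \<eta>_Om th by (auto simp: e_def)
    have Fe: "0 < (\<integral>z. h z * exp (e \<bullet> T z) \<partial>M)" using FposO[OF eO] by (simp add: F_def)
    have li: "loss (Z i) \<theta> = - ln (h (Z i)) + ln (F e) - e \<bullet> T (Z i)" if i: "i < n" for i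
      unfolding loss_def F_def e_def[symmetric] using Z_supp i Fe
      by (intro loss_formula) auto
    have "(\<Sum>i<n. loss (Z i) \<theta>) = (\<Sum>i<n. - ln (h (Z i)) + ln (F e) - e \<bullet> T (Z i))"
      by (rule sum.cong) (simp_all add: li)
    also have "\<dots> = - (\<Sum>i<n. ln (h (Z i))) + real n * ln (F e) - e \<bullet> (\<Sum>i<n. T (Z i))"
      by (simp add: sum.distrib sum_subtractf inner_sum_right sum_negf)
    finally have E: "emp_loss loss n Z \<theta> = (- (\<Sum>i<n. ln (h (Z i))) + real n * ln (F e) - e \<bullet> (\<Sum>i<n. T (Z i))) / real n"
      by (simp add: emp_loss_def)
    have R: "ln (p0 e) = - (n0 * ln (F e)) + e \<bullet> \<tau>0 - ln Z0"
      unfolding p0_def F_def using reg_formula[OF Fe Z0_pos, where rr=n0 and tau=\<tau>0] by simp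
    have "emp_loss loss n Z \<theta> + - (1 / real n) * ln (p0 e)
        = (ln Z0 - (\<Sum>i<n. ln (h (Z i)))) / real n + (N / real n) * (ln (F e) - (e \<bullet> \<tau>0 + e \<bullet> (\<Sum>i<n. T (Z i))) / N)"
      unfolding E R using npos N_def Npos by (rule arith_sum)
    thus ?thesis unfolding C0_def V_def e_def S_def inner_add_right .
  qed
  show ?thesis
  proof (cases "\<Theta> = {}")
    case True
    have "bayes_optimal_reg \<Theta> (emp_loss loss n Z) (\<lambda>\<theta>. - (1 / real n) * ln (p0 (\<eta> \<theta>))) Lbar
       \<and> perfect_reg \<Theta> (emp_loss loss n Z) (\<lambda>\<theta>. - (1 / real n) * ln (p0 (\<eta> \<theta>))) Lbar"
      by (rule final_abstract[where a=1 and c=0]) (auto simp: True)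
    thus ?thesis unfolding Lbar_def .
  next
    case False
    then obtain t0 where t0: "t0 \<in> \<Theta>" by blast
    define c where "c = C0 + (N / real n) * (V t0 - Lbar t0)"
    have eq: "\<forall>\<theta>\<in>\<Theta>. emp_loss loss n Z \<theta> + - (1 / real n) * ln (p0 (\<eta> \<theta>)) = c + (N / real n) * Lbar \<theta>"
    proof
      fix \<theta> assume th: "\<theta> \<in> \<Theta>"
      have Vth: "V \<theta> = Lbar \<theta> - Lbar t0 + V t0" using key[OF th t0] by simp
      show "emp_loss loss n Z \<theta> + - (1 / real n) * ln (p0 (\<eta> \<theta>)) = c + (N / real n) * Lbar \<theta>"
        unfolding sumf[OF th] c_def Vth by (simp add: algebra_simps)
    qed
    have "bayes_optimal_reg \<Theta> (emp_loss loss n Z) (\<lambda>\<theta>. - (1 / real n) * ln (p0 (\<eta> \<theta>))) Lbar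
       \<and> perfect_reg \<Theta> (emp_loss loss n Z) (\<lambda>\<theta>. - (1 / real n) * ln (p0 (\<eta> \<theta>))) Lbar"
      by (rule final_abstract[OF _ eq]) (use npos Npos in simp)
    thus ?thesis unfolding Lbar_def .
  qed
qed


end
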